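(* Let $n\ge 2$, let $\Sigma^*$ be an $n\times n$ positive definite matrix with $\Omega^*=(\Sigma^* )^{-1}$, whose conditional independence structure is a tree $T^*$ on $\{1,\dots,n\}$. Let $D^*$ be a diagonal matrix with nonnegative diagonal entries such that $D^*_{ii}>0$ whenever $i$ is a neighbor (in $T^*$) of a leaf of $T^*$, and let $\Sigma^o=\Sigma^*+D^*$. Then for every tree $T^q\in\mathcal{T}_{T^*}$ there exist an $n\times n$ positive definite matrix $\Sigma^q$ whose conditional independence structure is $T^q$ and a diagonal matrix $D^q$ with nonnegative diagonal entries such that $\Sigma^o=\Sigma^q+D^q$.
   Context: For an $n\times n$ positive definite (covariance) matrix $\Sigma$ with inverse $\Omega=\Sigma^{-1}$, its conditional independence structure is the graph on vertex set $\{1,\dots,n\}$ with an edge $\{i,j\}$ ($i\neq j$) if and only if $\Omega_{ij}\neq 0$; "the structure of $\Sigma$ is the tree $T$" means this graph equals $T$. Let $\mathcal{L}$ be the set of leaves of $T^*$. For a subset $\mathcal{S}\subseteq\mathcal{L}$ in which no two leaves share a common neighbor, let $T^{\mathcal{S}}$ be the tree obtained from $T^*$ by exchanging the position of each leaf $a\in\mathcal{S}$ with its unique neighbor $b$ (i.e. the image of $T^*$ under the permutation of vertex labels that swaps each such $a$ with its neighbor $b$). $\mathcal{T}_{T^*}$ is the set of all trees $T^{\mathcal{S}}$ for all such subsets $\mathcal{S}$. *)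

theory Defs
  imports "HOL-Analysis.Analysis"
begin

definition pos_def_mat :: "real^'n^'n \<Rightarrow> bool" where
  "pos_def_mat A \<longleftrightarrow> transpose A = A \<and> (\<forall>x::real^'n. x \<noteq> 0 \<longrightarrow> x \<bullet> (A *v x) > 0)"

definition diag_nonneg :: "real^'n^'n \<Rightarrow> bool" where
  "diag_nonneg D \<longleftrightarrow> (\<forall>i j. i \<noteq> j \<longrightarrow> D$i$j = 0) \<and> (\<forall>i. D$i$i \<ge> 0)"

definition adj :: "'n set set \<Rightarrow> 'n \<Rightarrow> 'n \<Rightarrow> bool" where
  "adj E i j \<longleftrightarrow> i \<noteq> j \<and> {i, j} \<in> E"

definition simple_graph :: "'n set set \<Rightarrow> bool" where
  "simple_graph E \<longleftrightarrow> (\<forall>e\<in>E. card e = 2)"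

definition connected_graph :: "'n set set \<Rightarrow> bool" where
  "connected_graph E \<longleftrightarrow> (\<forall>i j. (adj E)\<^sup>*\<^sup>* i j)"

text \<open>Acyclic: every edge is a bridge (its endpoints are disconnected once it is removed).\<close>
definition acyclic_graph :: "'n set set \<Rightarrow> bool" where
  "acyclic_graph E \<longleftrightarrow> (\<forall>i j. adj E i j \<longrightarrow> \<not> (adj (E - {{i, j}}))\<^sup>*\<^sup>* i j)"

definition is_tree :: "'n set set \<Rightarrow> bool" where
  "is_tree E \<longleftrightarrow> simple_graph E \<and> connected_graph E \<and> acyclic_graph E"

definition ci_structure :: "real^'n^'n \<Rightarrow> 'n set set" where
  "ci_structure S = {{i, j} | i j. i \<noteq> j \<and> matrix_inv S $ i $ j \<noteq> 0}"

definition leaves :: "'n set set \<Rightarrow> 'n set" where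
  "leaves T = {a. card {b. adj T a b} = 1}"

definition nbr :: "'n set set \<Rightarrow> 'n \<Rightarrow> 'n" where
  "nbr T a = (THE b. adj T a b)"

text \<open>Vertex permutation swapping each leaf a in S with its unique neighbour.\<close>
definition swap_perm :: "'n set set \<Rightarrow> 'n set \<Rightarrow> 'n \<Rightarrow> 'n" where
  "swap_perm T S x =
     (if x \<in> S then nbr T x
      else if (\<exists>a\<in>S. nbr T a = x) then (THE a. a \<in> S \<and> nbr T a = x)
      else x)"

definition swap_tree :: "'n set set \<Rightarrow> 'n set \<Rightarrow> 'n set set" where
  "swap_tree T S = (\<lambda>e. swap_perm T S ` e) ` T"

definition admissible_leaf_set :: "'n set set \<Rightarrow> 'n set \<Rightarrow> bool" where
  "admissible_leaf_set T S \<longleftrightarrow> S \<subseteq> leaves T \<and>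
     (\<forall>a\<in>S. \<forall>a'\<in>S. a \<noteq> a' \<longrightarrow> nbr T a \<noteq> nbr T a')"

definition swapped_trees :: "'n set set \<Rightarrow> 'n set set set" where
  "swapped_trees T = {swap_tree T S | S. admissible_leaf_set T S}"

end

theory Submission
  imports Defs
begin

definition sw :: "'a \<Rightarrow> 'a \<Rightarrow> 'a \<Rightarrow> 'a" where
  "sw a b x = (if x = a then b else if x = b then a else x)"

lemma sum_split2:
  fixes f :: "'n::finite \<Rightarrow> real"
  assumes "a \<noteq> b"
  shows "sum f UNIV = f a + f b + sum f (UNIV - {a, b})"
proof -
  have "sum f UNIV = f a + sum f (UNIV - {a})" by (simp add: sum.remove)
  moreover have "sum f (UNIV - {a}) = f b + sum f (UNIV - {a} - {b})"
    using assms by (intro sum.remove) auto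
  moreover have "UNIV - {a} - {b} = UNIV - {a, b}" by auto
  ultimately show ?thesis by simp
qed

lemma inv_unique:
  fixes A B :: "real^'n^'n"
  assumes "B ** A = mat 1"
  shows "matrix_inv A = B"
proof -
  have AB: "A ** B = mat 1" using assms matrix_left_right_inverse by blast
  have "\<exists>A'. A ** A' = mat 1 \<and> A' ** A = mat 1" using assms AB by blast
  then have M: "A ** matrix_inv A = mat 1 \<and> matrix_inv A ** A = mat 1"
    unfolding matrix_inv_def by (rule someI_ex)
  have "matrix_inv A = matrix_inv A ** (A ** B)" using AB by simp
  also have "\<dots> = B" using M by (simp add: matrix_mul_assoc)
  finally show ?thesis .
qed

lemma pd_sym: "pos_def_mat A \<Longrightarrow> A $ i $ j = A $ j $ i"
  unfolding pos_def_mat_def by (metis transpose_def vec_lambda_beta)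

lemma pd_left_inv:
  fixes A :: "real^'n^'n"
  assumes "pos_def_mat A"
  shows "matrix_inv A ** A = mat 1" "A ** matrix_inv A = mat 1"
proof -
  have "\<forall>x. A *v x = 0 \<longrightarrow> x = 0"
    using assms unfolding pos_def_mat_def by (metis inner_zero_right less_irrefl)
  then obtain B where B: "B ** A = mat 1" using matrix_left_invertible_ker by blast
  then show "matrix_inv A ** A = mat 1" using inv_unique by metis
  then show "A ** matrix_inv A = mat 1" using matrix_left_right_inverse by blast
qed

lemma pd_inv_sym:
  fixes A :: "real^'n^'n"
  assumes "pos_def_mat A"
  shows "matrix_inv A $ i $ j = matrix_inv A $ j $ i"
proof -
  have tA: "transpose A = A" using assms unfolding pos_def_mat_def by blast
  have "transpose (matrix_inv A) ** A = mat 1"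
    using pd_left_inv(2)[OF assms] matrix_transpose_mul[of A "matrix_inv A"] tA by simp
  then have "matrix_inv A = transpose (matrix_inv A)" using inv_unique by metis
  then show ?thesis by (metis transpose_def vec_lambda_beta)
qed

lemma pd_diag_pos:
  fixes A :: "real^'n^'n"
  assumes "pos_def_mat A"
  shows "A $ i $ i > 0"
proof -
  have "axis i (1::real) \<noteq> 0" by (simp add: axis_eq_0_iff)
  then have "axis i 1 \<bullet> (A *v axis i 1) > 0" using assms unfolding pos_def_mat_def by blast
  moreover have "axis i 1 \<bullet> (A *v axis i 1) = (A *v axis i 1) \<bullet> axis i 1" by (rule inner_commute)
  moreover have "(A *v axis i 1) \<bullet> axis i (1::real) = A$i$i"
    by (simp add: inner_axis matrix_vector_mult_basis column_def)
  ultimately show ?thesis by simp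
qed

lemma sum_supp1:
  fixes g :: "'n::finite \<Rightarrow> real"
  assumes "\<And>z. z \<noteq> a \<Longrightarrow> g z = 0"
  shows "sum g UNIV = g a"
proof -
  have "sum g UNIV = g a + sum g (UNIV - {a})" by (simp add: sum.remove)
  moreover have "sum g (UNIV - {a}) = 0" using assms by (intro sum.neutral) auto
  ultimately show ?thesis by simp
qed

lemma sum_supp2:
  fixes g :: "'n::finite \<Rightarrow> real"
  assumes "a \<noteq> b" "\<And>z. z \<noteq> a \<Longrightarrow> z \<noteq> b \<Longrightarrow> g z = 0"
  shows "sum g UNIV = g a + g b"
proof -
  have "sum g (UNIV - {a, b}) = 0" using assms by (intro sum.neutral) auto
  then show ?thesis using sum_split2[OF assms(1), of g] by simp
qed

lemma inner_sum: "(x::real^'n) \<bullet> y = (\<Sum>i\<in>UNIV. x$i * y$i)"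
  by (simp add: inner_vec_def inner_real_def)

lemma mv_sum: "((A::real^'n^'m) *v x) $ i = (\<Sum>j\<in>UNIV. A$i$j * x$j)"
  by (simp add: matrix_vector_mult_def)

lemma mm_sum: "((A::real^'n^'m) ** B) $ i $ j = (\<Sum>k\<in>UNIV. A$i$k * B$k$j)"
  by (simp add: matrix_matrix_mult_def)

lemma alg_aa:
  fixes maa mab mbb sab t :: real
  assumes "maa \<noteq> 0" "mab \<noteq> 0" "t \<noteq> 0"
  shows "(mbb - mab^2/maa + 1/t)/((-mab/maa)^2) * ((-mab/maa) * sab) + (-1/(t*(-mab/maa))) * sab
     + (- mab * ((1 - mab * sab) / maa) - mbb * sab)/(-mab/maa) = 1"
  using assms by (simp add: field_simps power2_eq_square)

lemma alg_ay:
  fixes maa mab mbb sby t d :: real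
  assumes "maa \<noteq> 0" "mab \<noteq> 0" "t \<noteq> 0"
  shows "(mbb - mab^2/maa + 1/t)/((-mab/maa)^2) * ((-mab/maa) * sby) + (-1/(t*(-mab/maa))) * (sby + d * t)
    + (d - mab * ((-mab/maa) * sby) - mbb * sby)/(-mab/maa) = 0"
  using assms by (simp add: field_simps power2_eq_square)

lemma alg_b:
  fixes \<beta> sby t d :: real
  assumes "\<beta> \<noteq> 0" "t \<noteq> 0"
  shows "(-1/(t*\<beta>)) * (\<beta> * sby) + (1/t) * (sby + d * t) = d"
  using assms by (simp add: field_simps)

lemma vec_eqI: "(\<And>i. x$i = y$i) \<Longrightarrow> x = y"
  by (simp add: vec_eq_iff)

lemma swap_one:
  fixes S :: "real^'n^'n" and a b :: 'n and t :: real
  assumes pd: "pos_def_mat S" and ab: "a \<noteq> b"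
    and leaf: "\<And>z. z \<noteq> a \<Longrightarrow> z \<noteq> b \<Longrightarrow> matrix_inv S $ a $ z = 0"
    and nz: "matrix_inv S $ a $ b \<noteq> 0" and tpos: "t > 0"
  shows "\<exists>S'. pos_def_mat S' \<and> (\<forall>x y. x \<noteq> y \<longrightarrow> S'$x$y = S$x$y) \<and> S'$a$a < S$a$a
     \<and> S'$b$b = S$b$b + t \<and> (\<forall>x. x \<noteq> a \<longrightarrow> x \<noteq> b \<longrightarrow> S'$x$x = S$x$x)
     \<and> (\<forall>x y. x \<noteq> y \<longrightarrow> (matrix_inv S' $ x $ y \<noteq> 0 \<longleftrightarrow> matrix_inv S $ sw a b x $ sw a b y \<noteq> 0))"
proof -
  define M where "M = matrix_inv S"
  have MS: "M ** S = mat 1" using pd_left_inv[OF pd] by (simp add: M_def)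
  have Msym: "\<And>i j. M$i$j = M$j$i" unfolding M_def using pd_inv_sym[OF pd] by blast
  have Ssym: "\<And>i j. S$i$j = S$j$i" using pd_sym[OF pd] by blast
  have leafM: "\<And>z. z \<noteq> a \<Longrightarrow> z \<noteq> b \<Longrightarrow> M$a$z = 0" using leaf M_def by simp
  have leafM': "\<And>z. z \<noteq> a \<Longrightarrow> z \<noteq> b \<Longrightarrow> M$z$a = 0" using leafM Msym by metis
  have nzM: "M$a$b \<noteq> 0" using nz M_def by simp
  define R where "R x y = (\<Sum>z\<in>UNIV - {a,b}. M$x$z * S$z$y)" for x y
  have row: "M$x$a * S$a$y + M$x$b * S$b$y + R x y = (if x = y then 1 else 0)" for x y
  proof -
    have "(M ** S)$x$y = (if x = y then 1 else 0)" using MS by (simp add: mat_def)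
    then have "(\<Sum>z\<in>UNIV. M$x$z * S$z$y) = (if x = y then 1 else 0)"
      by (simp add: mm_sum)
    then show ?thesis using sum_split2[OF ab, of "\<lambda>z. M$x$z * S$z$y"] by (simp add: R_def)
  qed
  have Ra: "R a y = 0" for y unfolding R_def by (rule sum.neutral) (auto simp: leafM)
  have rowa: "M$a$a * S$a$y + M$a$b * S$b$y = (if a = y then 1 else 0)" for y
    using row[of a y] Ra by simp
  have Sbb: "S$b$b > 0" by (rule pd_diag_pos[OF pd])
  have Maa: "M$a$a \<noteq> 0"
  proof
    assume "M$a$a = 0"
    then have "M$a$b * S$b$b = 0" using rowa[of b] ab by simp
    then show False using nzM Sbb by simp
  qed
  define \<beta> where "\<beta> = - M$a$b / M$a$a"
  have b0: "\<beta> \<noteq> 0" using nzM Maa by (simp add: \<beta>_def)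
  have Sa: "S$a$y = \<beta> * S$b$y" if "y \<noteq> a" for y
  proof -
    have "M$a$a * S$a$y = - M$a$b * S$b$y" using rowa[of y] that by simp
    then have "S$a$y = - M$a$b * S$b$y / M$a$a" using Maa by (simp add: field_simps)
    then show ?thesis by (simp add: \<beta>_def)
  qed
  define v where "v = S$a$a - \<beta> * S$a$b"
  have Saa: "S$a$a = (1 - M$a$b * S$a$b) / M$a$a"
  proof -
    have "M$a$a * S$a$a + M$a$b * S$a$b = 1" using rowa[of a] Ssym[of b a] by simp
    then show ?thesis using Maa by (simp add: field_simps)
  qed
  define w :: "real^'n" where "w = (\<chi> i. if i = a then -1 else if i = b then \<beta> else 0)"
  have Sw: "S *v w = (\<chi> i. if i = a then - v else 0)"
  proof (rule vec_eqI)
    fix i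
    have "(S *v w)$i = (\<Sum>j\<in>UNIV. S$i$j * w$j)" by (simp add: mv_sum)
    also have "\<dots> = S$i$a * w$a + S$i$b * w$b"
      by (rule sum_supp2[OF ab]) (simp add: w_def)
    also have "\<dots> = - S$i$a + \<beta> * S$i$b" using ab by (simp add: w_def)
    also have "\<dots> = (if i = a then - v else 0)"
    proof (cases "i = a")
      case True then show ?thesis by (simp add: v_def Ssym[of a b])
    next
      case False then show ?thesis using Sa[of i] Ssym[of i a] Ssym[of i b] by simp
    qed
    finally show "(S *v w)$i = (\<chi> i. if i = a then - v else 0)$i" by simp
  qed
  have wa: "w$a = -1" by (simp add: w_def)
  then have wnz: "w \<noteq> 0" by auto
  have Sx_w: "x \<bullet> (S *v w) = - v * x$a" for x
  proof -
    have "x \<bullet> (S *v w) = (\<Sum>i\<in>UNIV. x$i * (S *v w)$i)" by (rule inner_sum)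
    also have "\<dots> = x$a * (S *v w)$a" by (rule sum_supp1) (simp add: Sw)
    finally show ?thesis by (simp add: Sw)
  qed
  have wSw: "w \<bullet> (S *v w) = v" using Sx_w[of w] wa by simp
  have vpos: "v > 0" using pd wnz wSw unfolding pos_def_mat_def by metis
  have w_Sx: "w \<bullet> (S *v x) = - v * x$a" for x
  proof -
    have "w \<bullet> (S *v x) = (w v* S) \<bullet> x" by (simp add: dot_lmul_matrix)
    also have "w v* S = S *v w" using pd unfolding pos_def_mat_def by (metis transpose_matrix_vector)
    finally show ?thesis using Sx_w by (simp add: inner_commute)
  qed
  have quad: "(x + x$a *\<^sub>R w) \<bullet> (S *v (x + x$a *\<^sub>R w)) = x \<bullet> (S *v x) - v * (x$a)^2" for x
  proof -
    have "S *v (x + x$a *\<^sub>R w) = S *v x + x$a *\<^sub>R (S *v w)"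
      by (simp add: matrix_vector_right_distrib matrix_vector_mult_scaleR)
    then have "(x + x$a *\<^sub>R w) \<bullet> (S *v (x + x$a *\<^sub>R w)) = x \<bullet> (S *v x) + x$a * (x \<bullet> (S *v w)) + x$a * (w \<bullet> (S *v x)) + x$a * x$a * (w \<bullet> (S *v w))"
      by (simp add: inner_add_left inner_add_right algebra_simps)
    then show ?thesis using Sx_w[of x] w_Sx[of x] wSw by (simp add: power2_eq_square algebra_simps)
  qed
  define S' where "S' = (\<chi> i j. if i = a \<and> j = a then \<beta> * S$a$b else if i = b \<and> j = b then S$b$b + t else S$i$j)"
  have S'off: "\<And>x y. x \<noteq> y \<Longrightarrow> S'$x$y = S$x$y" by (auto simp: S'_def)
  have S'aa: "S'$a$a = S$a$a - v" by (simp add: S'_def v_def)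
  have S'bb: "S'$b$b = S$b$b + t" using ab by (simp add: S'_def)
  have S'xx: "\<And>x. x \<noteq> a \<Longrightarrow> x \<noteq> b \<Longrightarrow> S'$x$x = S$x$x" by (simp add: S'_def)
  have S'a: "S'$a$y = \<beta> * S$b$y" for y
    using Sa[of y] Ssym[of a b] ab by (cases "y = a") (auto simp: S'_def)
  have S'z: "\<And>z y. z \<noteq> a \<Longrightarrow> z \<noteq> b \<Longrightarrow> S'$z$y = S$z$y" by (simp add: S'_def)
  have S'b: "S'$b$y = S$b$y + (if y = b then t else 0)" for y using ab by (simp add: S'_def)
  define E :: "real^'n^'n" where "E = (\<chi> i j. if i = a \<and> j = a then - v else if i = b \<and> j = b then t else 0)"
  have S'E: "S' = S + E"
    by (simp add: vec_eq_iff S'_def E_def v_def)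
  have Ex: "x \<bullet> (E *v x) = - v * (x$a)^2 + t * (x$b)^2" for x
  proof -
    have Ei: "(E *v x)$i = (if i = a then - v * x$a else if i = b then t * x$b else 0)" for i
    proof -
      have "(E *v x)$i = (\<Sum>j\<in>UNIV. E$i$j * x$j)" by (rule mv_sum)
      also have "\<dots> = E$i$a * x$a + E$i$b * x$b" by (rule sum_supp2[OF ab]) (simp add: E_def)
      finally show ?thesis using ab by (simp add: E_def)
    qed
    have "x \<bullet> (E *v x) = (\<Sum>i\<in>UNIV. x$i * (E *v x)$i)" by (rule inner_sum)
    also have "\<dots> = x$a * (E *v x)$a + x$b * (E *v x)$b" by (rule sum_supp2[OF ab]) (simp add: Ei)
    finally show ?thesis using ab by (simp add: Ei power2_eq_square)
  qed
  have S'sym: "transpose S' = S'"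
    by (simp add: vec_eq_iff transpose_def S'_def Ssym)
  have S'pos: "x \<bullet> (S' *v x) > 0" if "x \<noteq> 0" for x
  proof -
    define u where "u = x + x$a *\<^sub>R w"
    have eq: "x \<bullet> (S' *v x) = u \<bullet> (S *v u) + t * (x$b)^2"
      using quad[of x] Ex[of x] unfolding u_def S'E by (simp add: matrix_vector_mult_add_rdistrib inner_add_right)
    have tx: "t * (x$b)^2 \<ge> 0" using tpos by simp
    show ?thesis
    proof (cases "u = 0")
      case False
      then have "u \<bullet> (S *v u) > 0" using pd unfolding pos_def_mat_def by blast
      then show ?thesis using eq tx by linarith
    next
      case True
      have xa: "x$a \<noteq> 0"
      proof
        assume "x$a = 0" then have "u = x" by (simp add: u_def)
        then show False using True that by simp
      qed
      have "u$b = 0" using True by simp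
      then have "x$b = - x$a * \<beta>" using ab by (simp add: u_def w_def)
      then have "x$b \<noteq> 0" using xa b0 by simp
      then have "t * (x$b)^2 > 0" using tpos by simp
      then show ?thesis using eq True by simp
    qed
  qed
  have pdS': "pos_def_mat S'" unfolding pos_def_mat_def using S'sym S'pos by blast
  define K where "K = M$b$b - (M$a$b)^2 / M$a$a"
  define M' :: "real^'n^'n" where "M' = (\<chi> x y.
      if x = a \<and> y = a then (K + 1/t) / \<beta>^2
      else if x = a \<and> y = b then - 1/(t*\<beta>) else if x = b \<and> y = a then - 1/(t*\<beta>)
      else if x = b \<and> y = b then 1/t
      else if x = a then M$b$y / \<beta> else if y = a then M$x$b / \<beta>
      else if x = b \<or> y = b then 0 else M$x$y)"
  have M'az: "M'$a$z = M$b$z / \<beta>" if "z \<noteq> a" "z \<noteq> b" for z using that ab by (simp add: M'_def)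
  have M'bz: "M'$b$z = 0" if "z \<noteq> a" "z \<noteq> b" for z using that ab by (simp add: M'_def)
  have M'xz: "M'$x$z = M$x$z" if "x \<noteq> a" "x \<noteq> b" "z \<noteq> a" "z \<noteq> b" for x z using that by (simp add: M'_def)
  have M'S': "M' ** S' = mat 1"
  proof (rule vec_eqI, rule vec_eqI)
    fix x y
    have "(M' ** S')$x$y = (\<Sum>z\<in>UNIV. M'$x$z * S'$z$y)" by (rule mm_sum)
    also have "\<dots> = M'$x$a * S'$a$y + M'$x$b * S'$b$y + (\<Sum>z\<in>UNIV-{a,b}. M'$x$z * S'$z$y)"
      by (rule sum_split2[OF ab])
    finally have e1: "(M' ** S')$x$y = M'$x$a * S'$a$y + M'$x$b * S'$b$y + (\<Sum>z\<in>UNIV-{a,b}. M'$x$z * S'$z$y)" .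
    have "(M' ** S')$x$y = (if x = y then 1 else 0)"
    proof (cases "x = a")
      case xa: True
      have rest: "(\<Sum>z\<in>UNIV-{a,b}. M'$x$z * S'$z$y) = R b y / \<beta>"
        unfolding R_def sum_divide_distrib by (rule sum.cong) (auto simp: xa M'az S'z)
      have rb: "M$a$b * S$a$y + M$b$b * S$b$y + R b y = (if b = y then 1 else 0)"
        using row[of b y] Msym[of b a] by simp
      have Ma: "M'$a$a = (M$b$b - (M$a$b)^2/M$a$a + 1/t)/((-M$a$b/M$a$a)^2)"
        by (simp add: M'_def K_def \<beta>_def)
      have Mb: "M'$a$b = -1/(t*(-M$a$b/M$a$a))" using ab by (simp add: M'_def \<beta>_def)
      show ?thesis
      proof (cases "y = a")
        case ya: True
        have Rb: "R b y = - M$a$b * S$a$a - M$b$b * S$a$b" using rb ya ab Ssym[of b a] by simp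
        have "M'$a$a * ((-M$a$b/M$a$a) * S$a$b) + M'$a$b * S$a$b + R b y/(-M$a$b/M$a$a) = 1"
          using alg_aa[where maa="M$a$a" and mab="M$a$b" and mbb="M$b$b" and sab="S$a$b" and t=t] Maa nzM tpos
          by (simp only: Ma Mb Rb Saa) simp
        moreover have "S'$a$y = (-M$a$b/M$a$a) * S$a$b" "S'$b$y = S$a$b"
          using S'a[of y] S'b[of y] ya ab Ssym[of a b] by (auto simp: \<beta>_def)
        ultimately show ?thesis using e1 rest xa ya by (simp add: \<beta>_def)
      next
        case ya: False
        define d :: real where "d = (if b = y then 1 else 0)"
        have "R b y = d - M$a$b * S$a$y - M$b$b * S$b$y"
          using rb unfolding d_def by linarith
        then have Rb: "R b y = d - M$a$b * ((-M$a$b/M$a$a) * S$b$y) - M$b$b * S$b$y"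
          using Sa[OF ya] by (simp add: \<beta>_def)
        have "M'$a$a * ((-M$a$b/M$a$a) * S$b$y) + M'$a$b * (S$b$y + d * t) + R b y/(-M$a$b/M$a$a) = 0"
          using alg_ay[where maa="M$a$a" and mab="M$a$b" and mbb="M$b$b" and sby="S$b$y" and t=t and d=d] Maa nzM tpos
          by (simp only: Ma Mb Rb) simp
        moreover have "S'$a$y = (-M$a$b/M$a$a) * S$b$y" "S'$b$y = S$b$y + d * t"
          using S'a[of y] S'b[of y] by (auto simp: \<beta>_def d_def)
        ultimately show ?thesis using e1 rest xa ya by (simp add: \<beta>_def)
      qed
    next
      case xna: False
      show ?thesis
      proof (cases "x = b")
        case xb: True
        have rest: "(\<Sum>z\<in>UNIV-{a,b}. M'$x$z * S'$z$y) = 0"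
          by (rule sum.neutral) (auto simp: xb M'bz)
        define d :: real where "d = (if y = b then 1 else 0)"
        have "M'$b$a * (\<beta> * S$b$y) + M'$b$b * (S$b$y + d * t) = d"
          using alg_b[OF b0, of t "S$b$y" d] tpos ab by (simp add: M'_def)
        then show ?thesis using e1 rest xb S'a[of y] S'b[of y] by (cases "y = b") (simp_all add: d_def)
      next
        case xnb: False
        have rest: "(\<Sum>z\<in>UNIV-{a,b}. M'$x$z * S'$z$y) = R x y"
          unfolding R_def by (rule sum.cong) (auto simp: xna xnb M'xz S'z)
        have "M'$x$a = M$x$b / \<beta>" "M'$x$b = 0" using xna xnb ab by (auto simp: M'_def)
        then have "M'$x$a * S'$a$y + M'$x$b * S'$b$y = M$x$b * S$b$y"
          using S'a[of y] b0 by simp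
        then show ?thesis using e1 rest row[of x y] leafM'[OF xna xnb] by simp
      qed
    qed
    then show "(M' ** S')$x$y = mat 1 $ x $ y" by (simp add: mat_def)
  qed
  have invS': "matrix_inv S' = M'" by (rule inv_unique[OF M'S'])
  have pat: "matrix_inv S' $ x $ y \<noteq> 0 \<longleftrightarrow> M $ sw a b x $ sw a b y \<noteq> 0" if "x \<noteq> y" for x y
    unfolding invS' using that ab b0 tpos nzM leafM leafM' Msym[of a b]
    by (cases "x = a"; cases "x = b"; cases "y = a"; cases "y = b") (auto simp: M'_def sw_def)
  show ?thesis
    apply (rule exI[of _ S'])
    using pdS' S'off S'aa vpos S'bb S'xx pat by (auto simp: M_def)
qed

lemma adj_ci:
  fixes Sg :: "real^'n^'n"
  assumes "pos_def_mat Sg"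
  shows "adj (ci_structure Sg) i j \<longleftrightarrow> i \<noteq> j \<and> matrix_inv Sg $ i $ j \<noteq> 0"
proof -
  have sym: "\<And>i j. matrix_inv Sg $ i $ j = matrix_inv Sg $ j $ i" by (rule pd_inv_sym[OF assms])
  show ?thesis
  proof
    assume "adj (ci_structure Sg) i j"
    then have ij: "i \<noteq> j" and "{i,j} \<in> ci_structure Sg" by (auto simp: adj_def)
    then obtain k l where kl: "{i,j} = {k,l}" "k \<noteq> l" "matrix_inv Sg $ k $ l \<noteq> 0"
      unfolding ci_structure_def by blast
    have "(i = k \<and> j = l) \<or> (i = l \<and> j = k)" using kl(1) by (simp add: doubleton_eq_iff)
    then show "i \<noteq> j \<and> matrix_inv Sg $ i $ j \<noteq> 0" using ij kl sym by metis
  next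
    assume "i \<noteq> j \<and> matrix_inv Sg $ i $ j \<noteq> 0"
    then show "adj (ci_structure Sg) i j" unfolding adj_def ci_structure_def by blast
  qed
qed

lemma adj_sym: "adj T i j \<Longrightarrow> adj T j i"
  unfolding adj_def by (metis insert_commute)

lemma leaf_nbr:
  assumes "a \<in> leaves T"
  shows "adj T a (nbr T a)" "\<And>z. adj T a z \<Longrightarrow> z = nbr T a"
proof -
  have "card {b. adj T a b} = 1" using assms by (simp add: leaves_def)
  then obtain b where B: "{b. adj T a b} = {b}" using card_1_singleton_iff by (metis One_nat_def)
  then have ab: "adj T a b" and u: "\<And>z. adj T a z \<Longrightarrow> z = b" by auto
  have nb: "nbr T a = b" unfolding nbr_def using ab u by (rule the_equality)
  show "adj T a (nbr T a)" using ab nb by simp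
  show "\<And>z. adj T a z \<Longrightarrow> z = nbr T a" using u nb by metis
qed

definition cond :: "'n set set \<Rightarrow> 'n set \<Rightarrow> bool" where
  "cond T S \<longleftrightarrow> inj_on (nbr T) S \<and> (\<forall>a\<in>S. nbr T a \<notin> S)"

lemma cond_subset: "cond T S \<Longrightarrow> S' \<subseteq> S \<Longrightarrow> cond T S'"
  unfolding cond_def by (meson inj_on_subset subsetD)

lemma sp1: "a \<in> S \<Longrightarrow> swap_perm T S a = nbr T a"
  by (simp add: swap_perm_def)

lemma sp2:
  assumes "cond T S" "a \<in> S"
  shows "swap_perm T S (nbr T a) = a"
proof -
  have n: "nbr T a \<notin> S" using assms unfolding cond_def by blast
  have "(THE a'. a' \<in> S \<and> nbr T a' = nbr T a) = a"
    using assms unfolding cond_def by (intro the_equality) (auto dest: inj_onD)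
  then show ?thesis using n assms(2) by (auto simp: swap_perm_def)
qed

lemma sp3: "x \<notin> S \<Longrightarrow> x \<notin> nbr T ` S \<Longrightarrow> swap_perm T S x = x"
  by (auto simp: swap_perm_def)

lemma sp_invol:
  assumes "cond T S"
  shows "swap_perm T S (swap_perm T S x) = x"
proof -
  consider "x \<in> S" | a where "a \<in> S" "x = nbr T a" | "x \<notin> S" "x \<notin> nbr T ` S" by blast
  then show ?thesis
  proof cases
    case 1 then show ?thesis using sp1 sp2[OF assms] by metis
  next
    case 2 then show ?thesis using sp1 sp2[OF assms] by metis
  next
    case 3 then show ?thesis using sp3 by metis
  qed
qed

lemma sp_inj:
  assumes "cond T S" "swap_perm T S x = swap_perm T S y"
  shows "x = y"
  using sp_invol[OF assms(1)] assms(2) by metis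

lemma sp_step:
  assumes c: "cond T (insert a S)" and aS: "a \<notin> S"
  shows "swap_perm T (insert a S) x = swap_perm T S (sw a (nbr T a) x)"
proof -
  have cS: "cond T S" using cond_subset[OF c] by blast
  have an: "nbr T a \<noteq> a" using c unfolding cond_def by auto
  have b1: "nbr T a \<notin> S" using c unfolding cond_def by auto
  have b2: "nbr T a \<notin> nbr T ` S"
  proof
    assume "nbr T a \<in> nbr T ` S"
    then obtain a' where "a' \<in> S" "nbr T a' = nbr T a" by auto
    then have "a' = a" using c unfolding cond_def by (meson inj_onD insertI1 insertI2)
    then show False using aS \<open>a' \<in> S\<close> by simp
  qed
  have a2: "a \<notin> nbr T ` S" using c unfolding cond_def by auto
  have pb: "swap_perm T S (nbr T a) = nbr T a" using sp3[OF b1 b2] .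
  have pa: "swap_perm T S a = a" using sp3[OF aS a2] .
  show ?thesis
  proof (cases "x = a")
    case True then show ?thesis using pb sp1[of a "insert a S" T] by (simp add: sw_def)
  next
    case xa: False
    show ?thesis
    proof (cases "x = nbr T a")
      case True then show ?thesis using pa sp2[OF c, of a] an by (simp add: sw_def)
    next
      case xb: False
      then have swx: "sw a (nbr T a) x = x" using xa by (simp add: sw_def)
      consider "x \<in> S" | a' where "a' \<in> S" "x = nbr T a'" | "x \<notin> S" "x \<notin> nbr T ` S" by blast
      then show ?thesis
      proof cases
        case 1 then show ?thesis using swx sp1[of x S T] sp1[of x "insert a S" T] by simp
      next
        case 2 then show ?thesis using swx sp2[OF cS, of a'] sp2[OF c, of a'] by simp
      next
        case 3
        then have "x \<notin> insert a S" "x \<notin> nbr T ` insert a S" using xa xb by auto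
        then show ?thesis using swx sp3[OF 3] sp3[of x "insert a S" T] by simp
      qed
    qed
  qed
qed

lemma main_induct:
  fixes Sg D :: "real^'n^'n" and S :: "'n set"
  assumes pd: "pos_def_mat Sg" and T: "T = ci_structure Sg"
    and Sleaf: "S \<subseteq> leaves T" and c: "cond T S"
    and Dpos: "\<forall>a\<in>S. D $ nbr T a $ nbr T a > 0" and Dnn: "\<forall>x. D$x$x \<ge> 0"
  shows "\<exists>Sq. pos_def_mat Sq \<and> (\<forall>x y. x \<noteq> y \<longrightarrow> Sq$x$y = Sg$x$y) \<and> (\<forall>x. Sq$x$x \<le> Sg$x$x + D$x$x)
      \<and> (\<forall>x y. x \<noteq> y \<longrightarrow> (matrix_inv Sq $ x $ y \<noteq> 0 \<longleftrightarrow> matrix_inv Sg $ swap_perm T S x $ swap_perm T S y \<noteq> 0))"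
proof -
  define M where "M = matrix_inv Sg"
  define P where "P S' Sq \<longleftrightarrow> pos_def_mat Sq \<and> (\<forall>x y. x \<noteq> y \<longrightarrow> Sq$x$y = Sg$x$y) \<and> (\<forall>x. Sq$x$x \<le> Sg$x$x + D$x$x)
      \<and> (\<forall>x. x \<notin> S' \<longrightarrow> x \<notin> nbr T ` S' \<longrightarrow> Sq$x$x = Sg$x$x)
      \<and> (\<forall>x y. x \<noteq> y \<longrightarrow> (matrix_inv Sq $ x $ y \<noteq> 0 \<longleftrightarrow> M $ swap_perm T S' x $ swap_perm T S' y \<noteq> 0))"
    for S' Sq
  have adjM: "adj T i j \<longleftrightarrow> i \<noteq> j \<and> M $ i $ j \<noteq> 0" for i j
    unfolding T M_def by (rule adj_ci[OF pd])
  have gen: "S' \<subseteq> S \<Longrightarrow> \<exists>Sq. P S' Sq" if fin: "finite S'" for S'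
    using fin
  proof (induction S' rule: finite_induct)
    case empty
    have "P {} Sg" unfolding P_def using pd Dnn by (simp add: swap_perm_def M_def)
    then show ?case by blast
  next
    case (insert a S')
    have cI: "cond T (insert a S')" using cond_subset[OF c insert.prems] .
    have cS': "cond T S'" using cond_subset[OF cI] by blast
    obtain Sq where PSq: "P S' Sq" using insert.IH insert.prems by blast
    define b where "b = nbr T a"
    have aS: "a \<in> S" using insert.prems by blast
    have aL: "a \<in> leaves T" using aS Sleaf by blast
    have adjab: "adj T a b" using leaf_nbr(1)[OF aL] by (simp add: b_def)
    have uniq: "\<And>z. adj T a z \<Longrightarrow> z = b" using leaf_nbr(2)[OF aL] by (simp add: b_def)
    have ab: "a \<noteq> b" using adjab by (simp add: adj_def)
    have Mab: "M $ a $ b \<noteq> 0" using adjab adjM by blast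
    have b1: "b \<notin> S'" using cI unfolding cond_def b_def by auto
    have b2: "b \<notin> nbr T ` S'"
    proof
      assume "b \<in> nbr T ` S'"
      then obtain a' where "a' \<in> S'" "nbr T a' = nbr T a" by (auto simp: b_def)
      then have "a' = a" using cI unfolding cond_def by (meson inj_onD insertI1 insertI2)
      then show False using insert.hyps \<open>a' \<in> S'\<close> by simp
    qed
    have a2: "a \<notin> nbr T ` S'" using cI unfolding cond_def by auto
    define p where "p = swap_perm T S'"
    have pb: "p b = b" using sp3[OF b1 b2] by (simp add: p_def)
    have pa: "p a = a" using sp3[OF insert.hyps(2) a2] by (simp add: p_def)
    have pinj: "\<And>x y. p x = p y \<Longrightarrow> x = y" using sp_inj[OF cS'] by (simp add: p_def)
    have Pinv: "\<And>x y. x \<noteq> y \<Longrightarrow> (matrix_inv Sq $ x $ y \<noteq> 0 \<longleftrightarrow> M $ p x $ p y \<noteq> 0)"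
      using PSq unfolding P_def p_def by blast
    have leafq: "matrix_inv Sq $ a $ z = 0" if "z \<noteq> a" "z \<noteq> b" for z
    proof (rule ccontr)
      assume "matrix_inv Sq $ a $ z \<noteq> 0"
      then have m: "M $ a $ p z \<noteq> 0" using Pinv[of a z] that pa by simp
      have "p z \<noteq> a" using pinj pa that by metis
      then have "adj T a (p z)" using m adjM by simp
      then have "p z = p b" using uniq pb by simp
      then show False using pinj that by metis
    qed
    have nzq: "matrix_inv Sq $ a $ b \<noteq> 0" using Pinv[OF ab] pa pb Mab by simp
    have tpos: "D $ b $ b > 0" using Dpos aS by (simp add: b_def)
    have pdq: "pos_def_mat Sq" using PSq unfolding P_def by blast
    obtain Sq' where SS: "pos_def_mat Sq' \<and> (\<forall>x y. x \<noteq> y \<longrightarrow> Sq'$x$y = Sq$x$y) \<and> Sq'$a$a < Sq$a$a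
     \<and> Sq'$b$b = Sq$b$b + D$b$b \<and> (\<forall>x. x \<noteq> a \<longrightarrow> x \<noteq> b \<longrightarrow> Sq'$x$x = Sq$x$x)
     \<and> (\<forall>x y. x \<noteq> y \<longrightarrow> (matrix_inv Sq' $ x $ y \<noteq> 0 \<longleftrightarrow> matrix_inv Sq $ sw a b x $ sw a b y \<noteq> 0))"
    proof -
      have "\<exists>S'. pos_def_mat S' \<and> (\<forall>x y. x \<noteq> y \<longrightarrow> S'$x$y = Sq$x$y) \<and> S'$a$a < Sq$a$a
     \<and> S'$b$b = Sq$b$b + D$b$b \<and> (\<forall>x. x \<noteq> a \<longrightarrow> x \<noteq> b \<longrightarrow> S'$x$x = Sq$x$x)
     \<and> (\<forall>x y. x \<noteq> y \<longrightarrow> (matrix_inv S' $ x $ y \<noteq> 0 \<longleftrightarrow> matrix_inv Sq $ sw a b x $ sw a b y \<noteq> 0))"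
        by (rule swap_one[OF pdq ab _ nzq tpos]) (simp add: leafq)
      then show ?thesis by (elim exE) (erule that)
    qed
    have S1: "pos_def_mat Sq'" and S2: "\<forall>x y. x \<noteq> y \<longrightarrow> Sq'$x$y = Sq$x$y"
      and S3: "Sq'$a$a < Sq$a$a" and S4: "Sq'$b$b = Sq$b$b + D$b$b"
      and S5: "\<forall>x. x \<noteq> a \<longrightarrow> x \<noteq> b \<longrightarrow> Sq'$x$x = Sq$x$x"
      and S6: "\<forall>x y. x \<noteq> y \<longrightarrow> (matrix_inv Sq' $ x $ y \<noteq> 0 \<longleftrightarrow> matrix_inv Sq $ sw a b x $ sw a b y \<noteq> 0)"
      using SS by blast+
    have Q2: "\<forall>x y. x \<noteq> y \<longrightarrow> Sq$x$y = Sg$x$y" using PSq unfolding P_def by (elim conjE)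
    have Q3: "\<forall>x. Sq$x$x \<le> Sg$x$x + D$x$x" using PSq unfolding P_def by (elim conjE)
    have Q4: "\<forall>x. x \<notin> S' \<longrightarrow> x \<notin> nbr T ` S' \<longrightarrow> Sq$x$x = Sg$x$x" using PSq unfolding P_def by (elim conjE)
    have swinj: "sw a b x \<noteq> sw a b y" if "x \<noteq> y" for x y
      using that by (auto simp: sw_def)
    have stp: "swap_perm T (insert a S') x = p (sw a b x)" for x
      using sp_step[OF cI insert.hyps(2)] by (simp add: p_def b_def)
    have "P (insert a S') Sq'"
      unfolding P_def
    proof (intro conjI allI impI)
      show "pos_def_mat Sq'" by (rule S1)
    next
      fix x y :: 'n assume "x \<noteq> y"
      then show "Sq'$x$y = Sg$x$y" using S2 Q2 by simp
    next
      fix x :: 'n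
      show "Sq'$x$x \<le> Sg$x$x + D$x$x"
      proof -
        consider "x = a" | "x = b" | "x \<noteq> a" "x \<noteq> b" by blast
        then show ?thesis
        proof cases
          case 1 then show ?thesis using S3 Q3 by (metis less_imp_le order.trans)
        next
          case 2 then show ?thesis using S4 Q4 b1 b2 by simp
        next
          case 3 then show ?thesis using S5 Q3 by simp
        qed
      qed
    next
      fix x :: 'n assume "x \<notin> insert a S'" "x \<notin> nbr T ` insert a S'"
      then show "Sq'$x$x = Sg$x$x" using S5 Q4 by (simp add: b_def)
    next
      fix x y :: 'n assume xy: "x \<noteq> y"
      have "matrix_inv Sq' $ x $ y \<noteq> 0 \<longleftrightarrow> matrix_inv Sq $ sw a b x $ sw a b y \<noteq> 0" using S6 xy by blast
      also have "\<dots> \<longleftrightarrow> M $ p (sw a b x) $ p (sw a b y) \<noteq> 0" using Pinv swinj[OF xy] by blast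
      finally show "matrix_inv Sq' $ x $ y \<noteq> 0 \<longleftrightarrow> M $ swap_perm T (insert a S') x $ swap_perm T (insert a S') y \<noteq> 0"
        by (simp add: stp)
    qed
    then show ?case by blast
  qed
  obtain Sq where "P S Sq" using gen[of S] by auto
  then show ?thesis unfolding P_def M_def by (elim conjE, intro exI[of _ Sq] conjI) assumption+
qed

theorem theorem1:
  fixes Sigma_star D_star :: "real^'n^'n" and T_star :: "'n set set"
  assumes "CARD('n) \<ge> 2"
    and "pos_def_mat Sigma_star"
    and "is_tree T_star"
    and "ci_structure Sigma_star = T_star"
    and "diag_nonneg D_star"
    and "\<And>i a. a \<in> leaves T_star \<Longrightarrow> adj T_star i a \<Longrightarrow> D_star $ i $ i > 0"
    and "Tq \<in> swapped_trees T_star"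
  shows "\<exists>Sigma_q D_q :: real^'n^'n. pos_def_mat Sigma_q \<and> ci_structure Sigma_q = Tq \<and>
           diag_nonneg D_q \<and> Sigma_star + D_star = Sigma_q + D_q"
proof -
  note pd = assms(2)
  define T where "T = T_star"
  have T: "T = ci_structure Sigma_star" using assms(4) by (simp add: T_def)
  obtain S where adm: "admissible_leaf_set T S" and Tq: "Tq = swap_tree T S"
    using assms(7) unfolding swapped_trees_def T_def by blast
  have SL: "S \<subseteq> leaves T" using adm unfolding admissible_leaf_set_def by blast
  have inj: "inj_on (nbr T) S" using adm unfolding admissible_leaf_set_def inj_on_def by blast
  define M where "M = matrix_inv Sigma_star"
  have adjM: "adj T i j \<longleftrightarrow> i \<noteq> j \<and> M $ i $ j \<noteq> 0" for i j
    unfolding T M_def by (rule adj_ci[OF pd])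
  have Tset: "T = {{i, j} | i j. i \<noteq> j \<and> M $ i $ j \<noteq> 0}"
    unfolding T M_def ci_structure_def by simp
  show ?thesis
  proof (cases "\<exists>a\<in>S. nbr T a \<in> S")
    case True
    then obtain a where aS: "a \<in> S" and bS: "nbr T a \<in> S" by blast
    define b where "b = nbr T a"
    have aL: "a \<in> leaves T" and bL: "b \<in> leaves T" using aS bS SL by (auto simp: b_def)
    have ab: "adj T a b" using leaf_nbr(1)[OF aL] by (simp add: b_def)
    have nb: "nbr T b = a" using leaf_nbr(2)[OF bL adj_sym[OF ab]] by simp
    have conn: "(adj T)\<^sup>*\<^sup>* a z" for z
      using assms(3) unfolding is_tree_def connected_graph_def T_def by blast
    have all: "z = a \<or> z = b" for z
      using conn[of z]
    proof (induction rule: rtranclp_induct)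
      case base then show ?case by simp
    next
      case (step y z)
      then show ?case using leaf_nbr(2)[OF aL, of z] leaf_nbr(2)[OF bL, of z] nb b_def by metis
    qed
    have pa: "swap_perm T S a = b" using sp1[OF aS] by (simp add: b_def)
    have pb: "swap_perm T S b = a" using sp1[of b S T] bS nb by (simp add: b_def)
    have fixe: "swap_perm T S ` e = e" if eT: "e \<in> T" for e
    proof -
      obtain i j where e: "e = {i, j}" "i \<noteq> j" using eT Tset by blast
      then have "e = {a, b}" using all[of i] all[of j] by auto
      then show ?thesis using pa pb by auto
    qed
    have "Tq = T" unfolding Tq swap_tree_def using fixe by simp
    then show ?thesis using pd assms(4,5) T_def by auto
  next
    case False
    then have c: "cond T S" using inj unfolding cond_def by blast
    have Dpos: "\<forall>a\<in>S. D_star $ nbr T a $ nbr T a > 0"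
    proof
      fix a assume "a \<in> S"
      then have aL: "a \<in> leaves T" using SL by blast
      show "D_star $ nbr T a $ nbr T a > 0"
        using assms(6)[of a "nbr T a"] aL adj_sym[OF leaf_nbr(1)[OF aL]] by (simp add: T_def)
    qed
    have Dnn: "\<forall>x. D_star$x$x \<ge> 0" using assms(5) unfolding diag_nonneg_def by blast
    have "\<exists>Sq. pos_def_mat Sq \<and> (\<forall>x y. x \<noteq> y \<longrightarrow> Sq$x$y = Sigma_star$x$y) \<and> (\<forall>x. Sq$x$x \<le> Sigma_star$x$x + D_star$x$x)
      \<and> (\<forall>x y. x \<noteq> y \<longrightarrow> (matrix_inv Sq $ x $ y \<noteq> 0 \<longleftrightarrow> matrix_inv Sigma_star $ swap_perm T S x $ swap_perm T S y \<noteq> 0))"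
      by (rule main_induct[OF pd T SL c Dpos Dnn])
    then obtain Sq where QQ: "pos_def_mat Sq \<and> (\<forall>x y. x \<noteq> y \<longrightarrow> Sq$x$y = Sigma_star$x$y) \<and> (\<forall>x. Sq$x$x \<le> Sigma_star$x$x + D_star$x$x)
      \<and> (\<forall>x y. x \<noteq> y \<longrightarrow> (matrix_inv Sq $ x $ y \<noteq> 0 \<longleftrightarrow> matrix_inv Sigma_star $ swap_perm T S x $ swap_perm T S y \<noteq> 0))"
      by (rule exE)
    have Q1: "pos_def_mat Sq" using QQ by (elim conjE)
    have Q2: "\<forall>x y. x \<noteq> y \<longrightarrow> Sq$x$y = Sigma_star$x$y" using QQ by (elim conjE)
    have Q3: "\<forall>x. Sq$x$x \<le> Sigma_star$x$x + D_star$x$x" using QQ by (elim conjE)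
    have Q4: "\<forall>x y. x \<noteq> y \<longrightarrow> (matrix_inv Sq $ x $ y \<noteq> 0 \<longleftrightarrow> M $ swap_perm T S x $ swap_perm T S y \<noteq> 0)"
      using QQ unfolding M_def by (elim conjE)
    define p where "p = swap_perm T S"
    have pp: "p (p x) = x" for x using sp_invol[OF c] by (simp add: p_def)
    define Dq where "Dq = Sigma_star + D_star - Sq"
    have dq: "diag_nonneg Dq"
      unfolding diag_nonneg_def Dq_def using Q2 Q3 assms(5) unfolding diag_nonneg_def by auto
    have eq: "Sigma_star + D_star = Sq + Dq" unfolding Dq_def by (simp add: algebra_simps)
    have ci: "ci_structure Sq = Tq"
    proof
      show "ci_structure Sq \<subseteq> Tq"
      proof
        fix e assume "e \<in> ci_structure Sq"
        then obtain i j where e: "e = {i, j}" "i \<noteq> j" "matrix_inv Sq $ i $ j \<noteq> 0"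
          unfolding ci_structure_def by blast
        then have m: "M $ p i $ p j \<noteq> 0" using Q4 by (simp add: p_def)
        have "p i \<noteq> p j" using e(2) pp by metis
        then have "{p i, p j} \<in> T" using m Tset by blast
        moreover have "e = p ` {p i, p j}" using e pp by simp
        ultimately show "e \<in> Tq" unfolding Tq swap_tree_def p_def by blast
      qed
    next
      show "Tq \<subseteq> ci_structure Sq"
      proof
        fix e assume "e \<in> Tq"
        then obtain f where f: "f \<in> T" "e = p ` f" unfolding Tq swap_tree_def p_def by blast
        then obtain i j where ij: "f = {i, j}" "i \<noteq> j" "M $ i $ j \<noteq> 0" using Tset by blast
        have e: "e = {p i, p j}" using f ij by simp
        have n: "p i \<noteq> p j" using ij(2) pp by metis
        then have "matrix_inv Sq $ p i $ p j \<noteq> 0" using Q4 ij pp by (simp add: p_def)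
        then show "e \<in> ci_structure Sq" unfolding ci_structure_def using e n by blast
      qed
    qed
    show ?thesis using Q1 ci dq eq by blast
  qed
qed

end
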